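(* For every $t=0,1,\dots,T-1$ and every $x\in\mathbb R$, $0\le v^\pi_t(x)-v_t(x)=V_t(x)-V^*_t(x)+\epsilon_t(x)$.
   Context: Model. Fix an integer horizon $T\ge 2$, a discount factor $\alpha\in(0,1]$, and for $t=0,\dots,T-1$: unit ordering costs $c_t\in\mathbb R$, a salvage coefficient $c_T\in\mathbb R$, setup costs $K_t\ge 0$, functions $G_t:\mathbb R\to\mathbb R$, and independent nonnegative random demands $D_0,\dots,D_{T-1}$ with right-continuous distribution functions $F_t$ and finite means; all expectations appearing are assumed finite. Let $\delta(z)=1$ for $z>0$, $\delta(0)=0$. Put $C_t(y)=(c_t-\alpha c_{t+1})y+G_t(y)+\alpha c_{t+1}E[D_t]$. Standing assumptions: (i) each $C_t$ is convex with $C_t(y)\to+\infty$ as $|y|\to\infty$; (ii) $K_t\ge \alpha K_{t+1}$ for $t=0,\dots,T-2$. Optimal costs: $v_T(x)=-c_Tx$ and $v_t(x)=\min_{y\ge x}\{K_t\delta(y-x)+c_t(y-x)+G_t(y)+\alpha E[v_{t+1}(y-D_t)]\}$; $V^*_t(x)=v_t(x)+c_tx$. Grid construction. Fix $\theta>0$, $z_m=m\theta$, $Z_\theta=\{z_m:m\in\mathbb Z\}$, $f_t(n)=F_t(z_{n+1})-F_t(z_n)$ ($n\ge -1$). $C^m_t=\min\{y: C_t(y)=\min_x C_t(x)\}$; with $z_{n_0}<C^m_t\le z_{n_0+1}$, $S^U_t=\min\{z_m\in Z_\theta: z_m\ge C^m_t,\ C_t(z_m)>C_t(z_{n_0})+K_t\}$.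 $s_{T-1}$ is a point with $s_{T-1}\le C^m_{T-1}$, $C_{T-1}(s_{T-1})=C_{T-1}(C^m_{T-1})+K_{T-1}$; $\bar I_{T-1}=s_{T-1}$. For $t=T-2,\dots,0$: $I_t=\max\{z_m\in Z_\theta: z_m<\min(\bar I_{t+1}-\theta,C^m_t)\}$, $\bar I_t=\max\{z_m\in Z_\theta: z_m\le I_t,\ C_t(z_m)>C_t(I_t)+K_t\}+\theta$. $H_{T-1}=C_{T-1}$, $S_{T-1}=C^m_{T-1}$; $V_t(y)=H_t(S_t)+K_t$ for $y<s_t$, $V_t(y)=H_t(y)$ for $y\ge s_t$. For $t=T-2,\dots,0$: $H_t(y)=C_t(y)+\alpha\sum_{n=-1}^\infty V_{t+1}(y-z_n)f_t(n)$; $S_t=\max\{z_m\in Z_\theta: I_t\le z_m\le S^U_t,\ H_t(z_m)=\min\{H_t(z_n):z_n\in Z_\theta, I_t\le z_n\le S^U_t\}\}$; $s_t=S_t$ if $K_t=0$, else $s_t=\min\{z_m\in Z_\theta:\bar I_t\le z_m\le S_t,\ H_t(z_m)\le H_t(S_t)+K_t\}$. Policy cost. $v^\pi_T(x)=-c_Tx$ and, for $t\le T-1$, with $y_t(x)=S_t$ if $x<s_t$ and $y_t(x)=x$ otherwise, $v^\pi_t(x)=K_t\delta(y_t(x)-x)+c_t(y_t(x)-x)+G_t(y_t(x))+\alpha E[v^\pi_{t+1}(y_t(x)-D_t)]$. Error terms. For $t=1,\dots,T-1$, $A_t(x)=E[V_t(x-D_{t-1})]-\sum_{n=-1}^{\infty}V_t(x-z_n)f_{t-1}(n)$.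 $\epsilon_{T-1}\equiv 0$; for $t=0,\dots,T-2$: $\epsilon_t(x)=\alpha A_{t+1}(S_t)+\alpha E[\epsilon_{t+1}(S_t-D_t)]$ if $x<s_t$, and $\epsilon_t(x)=\alpha A_{t+1}(x)+\alpha E[\epsilon_{t+1}(x-D_t)]$ if $x\ge s_t$. *)

theory Defs
  imports "HOL-Probability.Probability"
begin

definition delta :: "real \<Rightarrow> real" where
  "delta z = (if z > 0 then 1 else 0)"

definition Cfun :: "real \<Rightarrow> (nat \<Rightarrow> real) \<Rightarrow> (nat \<Rightarrow> real \<Rightarrow> real) \<Rightarrow> 'w measure
    \<Rightarrow> (nat \<Rightarrow> 'w \<Rightarrow> real) \<Rightarrow> nat \<Rightarrow> real \<Rightarrow> real" where
  "Cfun \<alpha> c G M D t y =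
     (c t - \<alpha> * c (Suc t)) * y + G t y + \<alpha> * c (Suc t) * integral\<^sup>L M (D t)"

text \<open>Optimal cost v_t, indexed by j = T - t (backward recursion); the minimum over
  y >= x is written as an infimum.\<close>
fun vopt_aux :: "nat \<Rightarrow> real \<Rightarrow> (nat \<Rightarrow> real) \<Rightarrow> (nat \<Rightarrow> real) \<Rightarrow> (nat \<Rightarrow> real \<Rightarrow> real)
    \<Rightarrow> 'w measure \<Rightarrow> (nat \<Rightarrow> 'w \<Rightarrow> real) \<Rightarrow> nat \<Rightarrow> real \<Rightarrow> real" where
  "vopt_aux T \<alpha> c K G M D 0 x = - c T * x"
| "vopt_aux T \<alpha> c K G M D (Suc j) x =
     (let t = T - Suc j in
      Inf {K t * delta (y - x) + c t * (y - x) + G t y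
           + \<alpha> * integral\<^sup>L M (\<lambda>\<omega>. vopt_aux T \<alpha> c K G M D j (y - D t \<omega>)) | y. y \<ge> x})"

definition vopt :: "nat \<Rightarrow> real \<Rightarrow> (nat \<Rightarrow> real) \<Rightarrow> (nat \<Rightarrow> real) \<Rightarrow> (nat \<Rightarrow> real \<Rightarrow> real)
    \<Rightarrow> 'w measure \<Rightarrow> (nat \<Rightarrow> 'w \<Rightarrow> real) \<Rightarrow> nat \<Rightarrow> real \<Rightarrow> real" where
  "vopt T \<alpha> c K G M D t = vopt_aux T \<alpha> c K G M D (T - t)"

definition Vstar :: "nat \<Rightarrow> real \<Rightarrow> (nat \<Rightarrow> real) \<Rightarrow> (nat \<Rightarrow> real) \<Rightarrow> (nat \<Rightarrow> real \<Rightarrow> real)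
    \<Rightarrow> 'w measure \<Rightarrow> (nat \<Rightarrow> 'w \<Rightarrow> real) \<Rightarrow> nat \<Rightarrow> real \<Rightarrow> real" where
  "Vstar T \<alpha> c K G M D t x = vopt T \<alpha> c K G M D t x + c t * x"

definition zg :: "real \<Rightarrow> int \<Rightarrow> real" where
  "zg \<theta> m = of_int m * \<theta>"

definition Fdist :: "'w measure \<Rightarrow> (nat \<Rightarrow> 'w \<Rightarrow> real) \<Rightarrow> nat \<Rightarrow> real \<Rightarrow> real" where
  "Fdist M D t z = measure M {\<omega> \<in> space M. D t \<omega> \<le> z}"

definition fgrid :: "'w measure \<Rightarrow> (nat \<Rightarrow> 'w \<Rightarrow> real) \<Rightarrow> real \<Rightarrow> nat \<Rightarrow> int \<Rightarrow> real" where
  "fgrid M D \<theta> t n = Fdist M D t (zg \<theta> (n + 1)) - Fdist M D t (zg \<theta> n)"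

text \<open>The grid sum  sum_{n=-1}^infinity V(y - z_n) f(n)  (index n = k - 1, k in nat).\<close>
definition gridE :: "real \<Rightarrow> (int \<Rightarrow> real) \<Rightarrow> (real \<Rightarrow> real) \<Rightarrow> real \<Rightarrow> real" where
  "gridE \<theta> f V y = (\<Sum>k. V (y - zg \<theta> (int k - 1)) * f (int k - 1))"

definition Cmin :: "(real \<Rightarrow> real) \<Rightarrow> real" where
  "Cmin C = Inf {y. C y = Inf (range C)}"

text \<open>S^U_t, with n_0 defined by z_{n_0} < C^m_t <= z_{n_0+1}.\<close>
definition SUp :: "real \<Rightarrow> (real \<Rightarrow> real) \<Rightarrow> real \<Rightarrow> real" where
  "SUp \<theta> C K =
     (let n0 = \<lceil>Cmin C / \<theta>\<rceil> - 1 in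
      zg \<theta> (LEAST m. zg \<theta> m \<ge> Cmin C \<and> C (zg \<theta> m) > C (zg \<theta> n0) + K))"

definition Igrid :: "real \<Rightarrow> real \<Rightarrow> real \<Rightarrow> real" where
  "Igrid \<theta> Ibn cm = zg \<theta> (GREATEST m. zg \<theta> m < min (Ibn - \<theta>) cm)"

definition Ibargrid :: "real \<Rightarrow> (real \<Rightarrow> real) \<Rightarrow> real \<Rightarrow> real \<Rightarrow> real" where
  "Ibargrid \<theta> C K I = zg \<theta> (GREATEST m. zg \<theta> m \<le> I \<and> C (zg \<theta> m) > C I + K) + \<theta>"

definition Vfun :: "(real \<Rightarrow> real) \<Rightarrow> real \<Rightarrow> real \<Rightarrow> real \<Rightarrow> real \<Rightarrow> real" where
  "Vfun H S s K y = (if y < s then H S + K else H y)"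

text \<open>Backward recursion for (H_t, S_t, s_t, Ibar_t), indexed by j = T - 1 - t.\<close>
fun gridrec :: "nat \<Rightarrow> real \<Rightarrow> (nat \<Rightarrow> real \<Rightarrow> real) \<Rightarrow> (nat \<Rightarrow> real) \<Rightarrow> (nat \<Rightarrow> int \<Rightarrow> real)
    \<Rightarrow> real \<Rightarrow> real \<Rightarrow> nat \<Rightarrow> (real \<Rightarrow> real) \<times> real \<times> real \<times> real" where
  "gridrec T \<alpha> C K f \<theta> sT 0 = (C (T - 1), Cmin (C (T - 1)), sT, sT)"
| "gridrec T \<alpha> C K f \<theta> sT (Suc j) =
     (case gridrec T \<alpha> C K f \<theta> sT j of (Hn, Sn, sn, Ibn) \<Rightarrow>
      (let t = T - 1 - Suc j;
           I = Igrid \<theta> Ibn (Cmin (C t));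
           Ib = Ibargrid \<theta> (C t) (K t) I;
           Vn = Vfun Hn Sn sn (K (Suc t));
           H = (\<lambda>y. C t y + \<alpha> * gridE \<theta> (f t) Vn y);
           SU = SUp \<theta> (C t) (K t);
           S = zg \<theta> (GREATEST m. I \<le> zg \<theta> m \<and> zg \<theta> m \<le> SU \<and>
                   (\<forall>n. I \<le> zg \<theta> n \<and> zg \<theta> n \<le> SU \<longrightarrow> H (zg \<theta> m) \<le> H (zg \<theta> n)));
           s = (if K t = 0 then S
                else zg \<theta> (LEAST m. Ib \<le> zg \<theta> m \<and> zg \<theta> m \<le> S \<and> H (zg \<theta> m) \<le> H S + K t))
       in (H, S, s, Ib)))"

definition Hg where "Hg T \<alpha> C K f \<theta> sT t = fst (gridrec T \<alpha> C K f \<theta> sT (T - 1 - t))"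
definition Sg where "Sg T \<alpha> C K f \<theta> sT t = fst (snd (gridrec T \<alpha> C K f \<theta> sT (T - 1 - t)))"
definition sg where "sg T \<alpha> C K f \<theta> sT t = fst (snd (snd (gridrec T \<alpha> C K f \<theta> sT (T - 1 - t))))"

definition Vg where
  "Vg T \<alpha> C K f \<theta> sT t y =
     Vfun (Hg T \<alpha> C K f \<theta> sT t) (Sg T \<alpha> C K f \<theta> sT t) (sg T \<alpha> C K f \<theta> sT t) (K t) y"

fun vpi_aux :: "nat \<Rightarrow> real \<Rightarrow> (nat \<Rightarrow> real) \<Rightarrow> (nat \<Rightarrow> real) \<Rightarrow> (nat \<Rightarrow> real \<Rightarrow> real)
    \<Rightarrow> 'w measure \<Rightarrow> (nat \<Rightarrow> 'w \<Rightarrow> real) \<Rightarrow> (nat \<Rightarrow> real) \<Rightarrow> (nat \<Rightarrow> real)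
    \<Rightarrow> nat \<Rightarrow> real \<Rightarrow> real" where
  "vpi_aux T \<alpha> c K G M D S s 0 x = - c T * x"
| "vpi_aux T \<alpha> c K G M D S s (Suc j) x =
     (let t = T - Suc j; y = (if x < s t then S t else x) in
      K t * delta (y - x) + c t * (y - x) + G t y
      + \<alpha> * integral\<^sup>L M (\<lambda>\<omega>. vpi_aux T \<alpha> c K G M D S s j (y - D t \<omega>)))"

definition vpi where
  "vpi T \<alpha> c K G M D S s t = vpi_aux T \<alpha> c K G M D S s (T - t)"

definition Aerr :: "'w measure \<Rightarrow> (nat \<Rightarrow> 'w \<Rightarrow> real) \<Rightarrow> real \<Rightarrow> (nat \<Rightarrow> int \<Rightarrow> real)
    \<Rightarrow> (nat \<Rightarrow> real \<Rightarrow> real) \<Rightarrow> nat \<Rightarrow> real \<Rightarrow> real" where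
  "Aerr M D \<theta> f V t x =
     integral\<^sup>L M (\<lambda>\<omega>. V t (x - D (t - 1) \<omega>)) - gridE \<theta> (f (t - 1)) (V t) x"

text \<open>epsilon_t, indexed by j = T - 1 - t.\<close>
fun eps_aux :: "nat \<Rightarrow> real \<Rightarrow> 'w measure \<Rightarrow> (nat \<Rightarrow> 'w \<Rightarrow> real) \<Rightarrow> real
    \<Rightarrow> (nat \<Rightarrow> int \<Rightarrow> real) \<Rightarrow> (nat \<Rightarrow> real \<Rightarrow> real) \<Rightarrow> (nat \<Rightarrow> real) \<Rightarrow> (nat \<Rightarrow> real)
    \<Rightarrow> nat \<Rightarrow> real \<Rightarrow> real" where
  "eps_aux T \<alpha> M D \<theta> f V S s 0 x = 0"
| "eps_aux T \<alpha> M D \<theta> f V S s (Suc j) x =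
     (let t = T - 1 - Suc j; y = (if x < s t then S t else x) in
      \<alpha> * Aerr M D \<theta> f V (Suc t) y
      + \<alpha> * integral\<^sup>L M (\<lambda>\<omega>. eps_aux T \<alpha> M D \<theta> f V S s j (y - D t \<omega>)))"

definition eps where
  "eps T \<alpha> M D \<theta> f V S s t = eps_aux T \<alpha> M D \<theta> f V S s (T - 1 - t)"

end

theory Submission imports Defs begin

lemma int_Least_ex:
  fixes P :: "int \<Rightarrow> bool"
  assumes "P w" "\<And>m. P m \<Longrightarrow> B \<le> m"
  shows "P (LEAST m. P m) \<and> (\<forall>m. P m \<longrightarrow> (LEAST m. P m) \<le> m)"
proof -
  let ?A = "{m. P m \<and> m \<le> w}"
  have fin: "finite ?A" by (rule finite_subset[of _ "{B..w}"]) (auto dest: assms(2))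
  have ne: "w \<in> ?A" using assms(1) by simp
  have "(LEAST m. P m) = Min ?A"
  proof (rule Least_equality)
    show "P (Min ?A)" using Min_in[OF fin] ne by blast
    fix y assume "P y"
    show "Min ?A \<le> y"
    proof (cases "y \<le> w")
      case True thus ?thesis using Min_le[OF fin] \<open>P y\<close> by simp
    next
      case False thus ?thesis using Min_le[OF fin ne] by simp
    qed
  qed
  moreover have "P (Min ?A)" using Min_in[OF fin] ne by blast
  moreover have "\<forall>m. P m \<longrightarrow> Min ?A \<le> m"
    using Min_le[OF fin] Min_le[OF fin ne] by (metis (mono_tags, lifting) mem_Collect_eq nle_le order_trans)
  ultimately show ?thesis by simp
qed

lemma int_Greatest_ex:
  fixes P :: "int \<Rightarrow> bool"
  assumes "P w" "\<And>m. P m \<Longrightarrow> m \<le> B"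
  shows "P (GREATEST m. P m) \<and> (\<forall>m. P m \<longrightarrow> m \<le> (GREATEST m. P m))"
proof -
  let ?A = "{m. P m \<and> w \<le> m}"
  have fin: "finite ?A" by (rule finite_subset[of _ "{w..B}"]) (auto dest: assms(2))
  have ne: "w \<in> ?A" using assms(1) by simp
  have "(GREATEST m. P m) = Max ?A"
  proof (rule Greatest_equality)
    show "P (Max ?A)" using Max_in[OF fin] ne by blast
    fix y assume "P y"
    show "y \<le> Max ?A"
    proof (cases "w \<le> y")
      case True thus ?thesis using Max_ge[OF fin] \<open>P y\<close> by simp
    next
      case False thus ?thesis using Max_ge[OF fin ne] by simp
    qed
  qed
  moreover have "P (Max ?A)" using Max_in[OF fin] ne by blast
  moreover have "\<forall>m. P m \<longrightarrow> m \<le> Max ?A"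
    using Max_ge[OF fin] Max_ge[OF fin ne] by (metis (mono_tags, lifting) mem_Collect_eq nle_le order_trans)
  ultimately show ?thesis by simp
qed

lemma zg_le_iff: "\<theta> > 0 \<Longrightarrow> zg \<theta> m \<le> zg \<theta> n \<longleftrightarrow> m \<le> n"
  by (simp add: zg_def)
lemma zg_less_iff: "\<theta> > 0 \<Longrightarrow> zg \<theta> m < zg \<theta> n \<longleftrightarrow> m < n"
  by (simp add: zg_def)
lemma zg_floor: "\<theta> > 0 \<Longrightarrow> zg \<theta> \<lfloor>y/\<theta>\<rfloor> \<le> y"
  unfolding zg_def by (metis floor_divide_lower)
lemma zg_ceil: "\<theta> > 0 \<Longrightarrow> y \<le> zg \<theta> \<lceil>y/\<theta>\<rceil>"
  unfolding zg_def by (metis ceiling_divide_upper)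
lemma zg_le_imp: "\<theta> > 0 \<Longrightarrow> zg \<theta> m \<le> y \<Longrightarrow> m \<le> \<lfloor>y/\<theta>\<rfloor>"
  unfolding zg_def by (simp add: le_floor_iff pos_le_divide_eq)
lemma zg_ge_imp: "\<theta> > 0 \<Longrightarrow> y \<le> zg \<theta> m \<Longrightarrow> \<lceil>y/\<theta>\<rceil> \<le> m"
  unfolding zg_def by (simp add: ceiling_le_iff pos_divide_le_eq)
lemma zg_minus1: "zg \<theta> (m - 1) = zg \<theta> m - \<theta>"
  unfolding zg_def by (simp add: algebra_simps)
lemma zg_plus1: "zg \<theta> m + \<theta> = zg \<theta> (m + 1)"
  unfolding zg_def by (simp add: algebra_simps)

lemma core_sS:
  fixes Ct H :: "real \<Rightarrow> real" and Ibn Kt \<theta> :: real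
  assumes th: "\<theta> > 0" and Kt: "Kt \<ge> 0"
    and top: "filterlim Ct at_top at_top" and bot: "filterlim Ct at_top at_bot"
  defines "I \<equiv> Igrid \<theta> Ibn (Cmin Ct)"
  defines "Ib \<equiv> Ibargrid \<theta> Ct Kt I" and "SU \<equiv> SUp \<theta> Ct Kt"
  defines "S \<equiv> zg \<theta> (GREATEST m. I \<le> zg \<theta> m \<and> zg \<theta> m \<le> SU \<and>
                   (\<forall>n. I \<le> zg \<theta> n \<and> zg \<theta> n \<le> SU \<longrightarrow> H (zg \<theta> m) \<le> H (zg \<theta> n)))"
  defines "s \<equiv> (if Kt = 0 then S
                else zg \<theta> (LEAST m. Ib \<le> zg \<theta> m \<and> zg \<theta> m \<le> S \<and> H (zg \<theta> m) \<le> H S + Kt))"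
  shows "s \<le> S"
proof -
  define b where "b = min (Ibn - \<theta>) (Cmin Ct)"
  define mI where "mI = (GREATEST m. zg \<theta> m < b)"
  have "(\<lambda>m. zg \<theta> m < b) (GREATEST m. zg \<theta> m < b) \<and> (\<forall>m. zg \<theta> m < b \<longrightarrow> m \<le> (GREATEST m. zg \<theta> m < b))"
  proof (rule int_Greatest_ex[where w="\<lfloor>b/\<theta>\<rfloor> - 1" and B="\<lfloor>b/\<theta>\<rfloor>"])
    show "zg \<theta> (\<lfloor>b / \<theta>\<rfloor> - 1) < b" using zg_floor[OF th, of b] th by (simp add: zg_minus1)
    fix m assume "zg \<theta> m < b" thus "m \<le> \<lfloor>b/\<theta>\<rfloor>" using zg_le_imp[OF th] by simp
  qed
  hence mI: "zg \<theta> mI < b" unfolding mI_def by blast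
  have I_eq: "I = zg \<theta> mI" unfolding I_def Igrid_def mI_def b_def by simp
  have I_lt: "I < Cmin Ct" using mI I_eq b_def by simp
  define n0 where "n0 = \<lceil>Cmin Ct / \<theta>\<rceil> - 1"
  define PU where "PU = (\<lambda>m. zg \<theta> m \<ge> Cmin Ct \<and> Ct (zg \<theta> m) > Ct (zg \<theta> n0) + Kt)"
  obtain N where N: "\<And>y. y \<ge> N \<Longrightarrow> Ct (zg \<theta> n0) + Kt + 1 \<le> Ct y"
    using top unfolding filterlim_at_top eventually_at_top_linorder by blast
  have "PU (LEAST m. PU m) \<and> (\<forall>m. PU m \<longrightarrow> (LEAST m. PU m) \<le> m)"
  proof (rule int_Least_ex[where w="\<lceil>max N (Cmin Ct)/\<theta>\<rceil>" and B="\<lceil>Cmin Ct/\<theta>\<rceil>"])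
    have "max N (Cmin Ct) \<le> zg \<theta> \<lceil>max N (Cmin Ct)/\<theta>\<rceil>" by (rule zg_ceil[OF th])
    thus "PU \<lceil>max N (Cmin Ct)/\<theta>\<rceil>" unfolding PU_def using N[of "zg \<theta> \<lceil>max N (Cmin Ct)/\<theta>\<rceil>"] by auto
    fix m assume "PU m" thus "\<lceil>Cmin Ct/\<theta>\<rceil> \<le> m" unfolding PU_def using zg_ge_imp[OF th] by simp
  qed
  hence "PU (LEAST m. PU m)" by blast
  moreover have SU_eq: "SU = zg \<theta> (LEAST m. PU m)" unfolding SU_def SUp_def PU_def n0_def by simp
  ultimately have SU_ge: "SU \<ge> Cmin Ct" unfolding PU_def by simp
  define mSU where "mSU = (LEAST m. PU m)"
  have SU_eq': "SU = zg \<theta> mSU" using SU_eq mSU_def by simp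
  define PB where "PB = (\<lambda>m. zg \<theta> m \<le> I \<and> Ct (zg \<theta> m) > Ct I + Kt)"
  obtain N2 where N2: "\<And>y. y \<le> N2 \<Longrightarrow> Ct I + Kt + 1 \<le> Ct y"
    using bot unfolding filterlim_at_top eventually_at_bot_linorder by blast
  have "PB (GREATEST m. PB m) \<and> (\<forall>m. PB m \<longrightarrow> m \<le> (GREATEST m. PB m))"
  proof (rule int_Greatest_ex[where w="\<lfloor>min N2 I/\<theta>\<rfloor>" and B=mI])
    have "zg \<theta> \<lfloor>min N2 I/\<theta>\<rfloor> \<le> min N2 I" by (rule zg_floor[OF th])
    thus "PB \<lfloor>min N2 I/\<theta>\<rfloor>" unfolding PB_def using N2[of "zg \<theta> \<lfloor>min N2 I/\<theta>\<rfloor>"] by auto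
    fix m assume "PB m" thus "m \<le> mI" unfolding PB_def I_eq using zg_le_iff[OF th] by simp
  qed
  hence PBg: "PB (GREATEST m. PB m)" by blast
  define g where "g = (GREATEST m. PB m)"
  have PBg': "PB g" using PBg g_def by simp
  have "zg \<theta> g \<le> zg \<theta> mI" using PBg' I_eq unfolding PB_def by simp
  hence "g \<le> mI" using zg_le_iff[OF th] by blast
  moreover have "g \<noteq> mI" using PBg' Kt I_eq unfolding PB_def by auto
  ultimately have "g + 1 \<le> mI" by simp
  hence "zg \<theta> (g + 1) \<le> zg \<theta> mI" using zg_le_iff[OF th] by blast
  moreover have "Ib = zg \<theta> (g + 1)" unfolding Ib_def Ibargrid_def g_def PB_def zg_plus1 by simp
  ultimately have Ib_le: "Ib \<le> I" using I_eq by simp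
  define PS where "PS = (\<lambda>m. I \<le> zg \<theta> m \<and> zg \<theta> m \<le> SU \<and>
                   (\<forall>n. I \<le> zg \<theta> n \<and> zg \<theta> n \<le> SU \<longrightarrow> H (zg \<theta> m) \<le> H (zg \<theta> n)))"
  have rng: "\<And>n. (I \<le> zg \<theta> n \<and> zg \<theta> n \<le> SU) \<longleftrightarrow> n \<in> {mI..mSU}"
    unfolding I_eq SU_eq' using zg_le_iff[OF th] by auto
  have "mI \<le> mSU" using I_lt SU_ge rng[of mI] I_eq by auto
  hence ne: "{mI..mSU} \<noteq> {}" by simp
  define A where "A = (\<lambda>m. H (zg \<theta> m)) ` {mI..mSU}"
  have finA: "finite A" "A \<noteq> {}" using ne unfolding A_def by auto
  obtain ms where ms: "ms \<in> {mI..mSU}" "H (zg \<theta> ms) = Min A"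
    using Min_in[OF finA] unfolding A_def by auto
  have "PS ms" unfolding PS_def
  proof (intro conjI allI impI)
    show "I \<le> zg \<theta> ms" "zg \<theta> ms \<le> SU" using rng ms(1) by auto
    fix n assume "I \<le> zg \<theta> n \<and> zg \<theta> n \<le> SU"
    hence "n \<in> {mI..mSU}" using rng by blast
    thus "H (zg \<theta> ms) \<le> H (zg \<theta> n)" unfolding ms(2) using Min_le[OF finA(1)] A_def by auto
  qed
  note PSms = this
  have bnd: "m \<le> mSU" if "PS m" for m
  proof -
    have "I \<le> zg \<theta> m \<and> zg \<theta> m \<le> SU" using that unfolding PS_def by blast
    hence "m \<in> {mI..mSU}" using rng by blast
    thus ?thesis by simp
  qed
  have PSg: "PS (GREATEST m. PS m)" using int_Greatest_ex[of PS ms mSU, OF PSms bnd] by blast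
  define gS where "gS = (GREATEST m. PS m)"
  have S_eq: "S = zg \<theta> gS" unfolding S_def gS_def PS_def by simp
  have "PS gS" using PSg gS_def by simp
  hence "I \<le> zg \<theta> gS" unfolding PS_def by blast
  hence I_le_S: "I \<le> S" using S_eq by simp
  show ?thesis
  proof (cases "Kt = 0")
    case True thus ?thesis unfolding s_def by simp
  next
    case False
    define PL where "PL = (\<lambda>m. Ib \<le> zg \<theta> m \<and> zg \<theta> m \<le> S \<and> H (zg \<theta> m) \<le> H S + Kt)"
    have "PL gS" unfolding PL_def using Ib_le I_le_S Kt S_eq by simp
    note PLg = this
    have bndL: "\<lceil>Ib/\<theta>\<rceil> \<le> m" if "PL m" for m
      using that zg_ge_imp[OF th, of Ib m] unfolding PL_def by blast
    have "PL (LEAST m. PL m)" using int_Least_ex[of PL gS, OF PLg bndL] by blast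
    thus ?thesis unfolding s_def using False unfolding PL_def[symmetric] by (simp add: PL_def)
  qed
qed


lemma arith1:
  fixes vp Kd ct y x G a EV c1 ED EE V H g e :: real
  assumes "vp = Kd + ct*(y-x) + G + a*(EV - (c1*y - c1*ED) + EE)" "V = Kd + H"
    "H = (ct - a*c1)*y + G + a*c1*ED + a*g" "e = a*(EV - g) + a*EE"
  shows "vp = V - ct*x + e"
  using assms by (simp add: algebra_simps)
lemma arith2:
  fixes vp Kd ct y x G a c1 ED V H e :: real
  assumes "vp = Kd + ct*(y-x) + G + a*(- c1*y - (- c1)*ED)" "V = Kd + H"
    "H = (ct - a*c1)*y + G + a*c1*ED" "e = 0"
  shows "vp = V - ct*x + e"
  using assms by (simp add: algebra_simps)

lemma grid_last:
  "Hg T \<alpha> C K f \<theta> sT (T-1) = C (T-1)" "Sg T \<alpha> C K f \<theta> sT (T-1) = Cmin (C (T-1))"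
  "sg T \<alpha> C K f \<theta> sT (T-1) = sT"
  unfolding Hg_def Sg_def sg_def by simp_all

lemma grid_step:
  assumes "t + 2 \<le> T" and th: "\<theta> > 0" and Kt: "K t \<ge> 0"
    and top: "filterlim (C t) at_top at_top" and bot: "filterlim (C t) at_top at_bot"
  shows "Hg T \<alpha> C K f \<theta> sT t = (\<lambda>y. C t y + \<alpha> * gridE \<theta> (f t) (Vg T \<alpha> C K f \<theta> sT (Suc t)) y)"
    and "sg T \<alpha> C K f \<theta> sT t \<le> Sg T \<alpha> C K f \<theta> sT t"
proof -
  define j where "j = T - 1 - Suc t"
  have e1: "T - 1 - t = Suc j" and e2: "T - 1 - Suc j = t" and e3: "T - 1 - Suc t = j" and e4: "T - Suc (Suc j) = t"
    using assms(1) unfolding j_def by auto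
  obtain Hn Sn sn Ibn where gr: "gridrec T \<alpha> C K f \<theta> sT j = (Hn, Sn, sn, Ibn)"
    by (cases "gridrec T \<alpha> C K f \<theta> sT j") auto
  have Vn: "Vg T \<alpha> C K f \<theta> sT (Suc t) = Vfun Hn Sn sn (K (Suc t))"
    unfolding Vg_def Hg_def Sg_def sg_def e3 gr by simp
  show "Hg T \<alpha> C K f \<theta> sT t = (\<lambda>y. C t y + \<alpha> * gridE \<theta> (f t) (Vg T \<alpha> C K f \<theta> sT (Suc t)) y)"
    unfolding Hg_def e1 Vn by (simp add: gr e2 e4 Let_def)
  define H where "H = (\<lambda>y. C t y + \<alpha> * gridE \<theta> (f t) (Vfun Hn Sn sn (K (Suc t))) y)"
  have "sg T \<alpha> C K f \<theta> sT t = (let I = Igrid \<theta> Ibn (Cmin (C t)); Ib = Ibargrid \<theta> (C t) (K t) I;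
      SU = SUp \<theta> (C t) (K t);
      S = zg \<theta> (GREATEST m. I \<le> zg \<theta> m \<and> zg \<theta> m \<le> SU \<and>
                   (\<forall>n. I \<le> zg \<theta> n \<and> zg \<theta> n \<le> SU \<longrightarrow> H (zg \<theta> m) \<le> H (zg \<theta> n)))
      in if K t = 0 then S
                else zg \<theta> (LEAST m. Ib \<le> zg \<theta> m \<and> zg \<theta> m \<le> S \<and> H (zg \<theta> m) \<le> H S + K t))"
    unfolding sg_def e1 by (simp add: gr e2 e4 Let_def H_def)
  moreover have "Sg T \<alpha> C K f \<theta> sT t = (let I = Igrid \<theta> Ibn (Cmin (C t));
      SU = SUp \<theta> (C t) (K t) in zg \<theta> (GREATEST m. I \<le> zg \<theta> m \<and> zg \<theta> m \<le> SU \<and>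
                   (\<forall>n. I \<le> zg \<theta> n \<and> zg \<theta> n \<le> SU \<longrightarrow> H (zg \<theta> m) \<le> H (zg \<theta> n))))"
    unfolding Sg_def e1 by (simp add: gr e2 e4 Let_def H_def)
  ultimately show "sg T \<alpha> C K f \<theta> sT t \<le> Sg T \<alpha> C K f \<theta> sT t"
    using core_sS[OF th Kt top bot, of Ibn H] by (simp add: Let_def)
qed

lemma C_bdd_below:
  fixes Ct :: "real \<Rightarrow> real"
  assumes cv: "convex_on UNIV Ct" and top: "filterlim Ct at_top at_top" and bot: "filterlim Ct at_top at_bot"
  shows "\<exists>b. \<forall>y. b \<le> Ct y"
proof -
  obtain N1 where N1: "\<And>y. y \<ge> N1 \<Longrightarrow> 0 \<le> Ct y"
    using top unfolding filterlim_at_top eventually_at_top_linorder by blast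
  obtain N2 where N2: "\<And>y. y \<le> N2 \<Longrightarrow> 0 \<le> Ct y"
    using bot unfolding filterlim_at_top eventually_at_bot_linorder by blast
  have cont: "continuous_on UNIV Ct" by (rule convex_on_continuous) (use cv in auto)
  let ?A = "{min N1 N2..max N1 N2}"
  have ne: "?A \<noteq> {}" by simp
  have cA: "continuous_on ?A Ct" using continuous_on_subset[OF cont] by blast
  obtain x0 where x0: "x0 \<in> ?A" "\<And>y. y \<in> ?A \<Longrightarrow> Ct x0 \<le> Ct y"
    using continuous_attains_inf[OF compact_Icc ne cA] by blast
  have "min 0 (Ct x0) \<le> Ct y" for y
  proof (cases "y \<in> ?A")
    case True thus ?thesis using x0(2)[of y] by simp
  next
    case False
    hence "y \<ge> N1 \<or> y \<le> N2" by auto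
    thus ?thesis using N1 N2 by force
  qed
  thus ?thesis by blast
qed

theorem theorem4p1:
  fixes T :: nat and \<alpha> \<theta> sT :: real
    and c K :: "nat \<Rightarrow> real" and G :: "nat \<Rightarrow> real \<Rightarrow> real"
    and M :: "'w measure" and D :: "nat \<Rightarrow> 'w \<Rightarrow> real"
  defines "C \<equiv> Cfun \<alpha> c G M D"
    and "f \<equiv> fgrid M D \<theta>"
    and "V \<equiv> Vg T \<alpha> (Cfun \<alpha> c G M D) K (fgrid M D \<theta>) \<theta> sT"
    and "S \<equiv> Sg T \<alpha> (Cfun \<alpha> c G M D) K (fgrid M D \<theta>) \<theta> sT"
    and "s \<equiv> sg T \<alpha> (Cfun \<alpha> c G M D) K (fgrid M D \<theta>) \<theta> sT"
    and "v \<equiv> vopt T \<alpha> c K G M D"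
    and "vp \<equiv> vpi T \<alpha> c K G M D (Sg T \<alpha> (Cfun \<alpha> c G M D) K (fgrid M D \<theta>) \<theta> sT) (sg T \<alpha> (Cfun \<alpha> c G M D) K (fgrid M D \<theta>) \<theta> sT)"
    and "\<epsilon> \<equiv> eps T \<alpha> M D \<theta> (fgrid M D \<theta>) (Vg T \<alpha> (Cfun \<alpha> c G M D) K (fgrid M D \<theta>) \<theta> sT) (Sg T \<alpha> (Cfun \<alpha> c G M D) K (fgrid M D \<theta>) \<theta> sT) (sg T \<alpha> (Cfun \<alpha> c G M D) K (fgrid M D \<theta>) \<theta> sT)"
  assumes T2: "T \<ge> 2"
    and alpha: "0 < \<alpha>" "\<alpha> \<le> 1"
    and theta: "\<theta> > 0"
    and K_nonneg: "\<forall>t<T. K t \<ge> 0"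
    and K_dec: "\<forall>t. t + 2 \<le> T \<longrightarrow> K t \<ge> \<alpha> * K (Suc t)"
    and M_prob: "prob_space M"
    and D_rv: "\<forall>t<T. D t \<in> borel_measurable M"
    and D_indep: "prob_space.indep_vars M (\<lambda>_. borel) D {..<T}"
    and D_nonneg: "\<forall>t<T. \<forall>\<omega>\<in>space M. D t \<omega> \<ge> 0"
    and D_mean: "\<forall>t<T. integrable M (D t)"
    and C_convex: "\<forall>t<T. convex_on UNIV (C t)"
    and C_coercive: "\<forall>t<T. filterlim (C t) at_top at_top \<and> filterlim (C t) at_top at_bot"
    and sT_le: "sT \<le> Cmin (C (T - 1))"
    and sT_eq: "C (T - 1) sT = C (T - 1) (Cmin (C (T - 1))) + K (T - 1)"
    and fin_v: "\<forall>t<T. \<forall>y. integrable M (\<lambda>\<omega>. v (Suc t) (y - D t \<omega>))"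
    and fin_vp: "\<forall>t<T. \<forall>y. integrable M (\<lambda>\<omega>. vp (Suc t) (y - D t \<omega>))"
    and fin_V: "\<forall>t. 1 \<le> t \<and> t < T \<longrightarrow> (\<forall>x. integrable M (\<lambda>\<omega>. V t (x - D (t - 1) \<omega>)))"
    and fin_eps: "\<forall>t. t + 2 \<le> T \<longrightarrow> (\<forall>x. integrable M (\<lambda>\<omega>. \<epsilon> (Suc t) (x - D t \<omega>)))"
    and fin_grid: "\<forall>t. t + 2 \<le> T \<longrightarrow>
         (\<forall>y. summable (\<lambda>k. V (Suc t) (y - zg \<theta> (int k - 1)) * f t (int k - 1)))"
  shows "\<forall>t<T. \<forall>x.
           0 \<le> vp t x - v t x \<and>
           vp t x - v t x = V t x - Vstar T \<alpha> c K G M D t x + \<epsilon> t x"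
proof -
  interpret prob_space M by (rule M_prob)
  have Econst: "\<And>a::real. (\<integral>\<omega>. a \<partial>M) = a" by (simp add: prob_space)
  have ED: "\<And>t a b. t < T \<Longrightarrow> (\<integral>\<omega>. a * (b - D t \<omega>) \<partial>M) = a * b - a * integral\<^sup>L M (D t)"
    using D_mean by (simp add: right_diff_distrib prob_space)
  have intlin: "\<And>t a b. t < T \<Longrightarrow> integrable M (\<lambda>\<omega>. a * (b - D t \<omega>))"
    using D_mean by simp
  have intlin2: "\<And>t a b m. t < T \<Longrightarrow> integrable M (\<lambda>\<omega>. a * (b - D t \<omega>) + m)"
    using D_mean by simp
  define H where "H = Hg T \<alpha> (Cfun \<alpha> c G M D) K (fgrid M D \<theta>) \<theta> sT"
  have C_eq: "\<And>t y. C t y = (c t - \<alpha> * c (Suc t)) * y + G t y + \<alpha> * c (Suc t) * integral\<^sup>L M (D t)"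
    unfolding C_def Cfun_def by simp
  have vp_T: "\<And>x. vp T x = - c T * x" unfolding vp_def vpi_def by simp
  have vp_step: "vp t x = (let y = (if x < s t then S t else x) in
      K t * delta (y - x) + c t * (y - x) + G t y + \<alpha> * (\<integral>\<omega>. vp (Suc t) (y - D t \<omega>) \<partial>M))"
    if "t < T" for t x
  proof -
    have e1: "T - t = Suc (T - Suc t)" and e2: "T - Suc (T - Suc t) = t" using that by auto
    show ?thesis unfolding vp_def vpi_def s_def S_def by (simp only: e1 vpi_aux.simps e2 Let_def)
  qed
  have v_T: "\<And>x. v T x = - c T * x" unfolding v_def vopt_def by simp
  have v_step: "v t x = Inf {K t * delta (y - x) + c t * (y - x) + G t y
           + \<alpha> * (\<integral>\<omega>. v (Suc t) (y - D t \<omega>) \<partial>M) | y. y \<ge> x}"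
    if "t < T" for t x
  proof -
    have e1: "T - t = Suc (T - Suc t)" and e2: "T - Suc (T - Suc t) = t" using that by auto
    show ?thesis unfolding v_def vopt_def by (simp only: e1 vopt_aux.simps e2 Let_def)
  qed
  have eps_last: "\<And>x. \<epsilon> (T - 1) x = 0" unfolding \<epsilon>_def eps_def by simp
  have eps_step: "\<epsilon> t x = (let y = (if x < s t then S t else x) in
      \<alpha> * ((\<integral>\<omega>. V (Suc t) (y - D t \<omega>) \<partial>M) - gridE \<theta> (f t) (V (Suc t)) y)
      + \<alpha> * (\<integral>\<omega>. \<epsilon> (Suc t) (y - D t \<omega>) \<partial>M))"
    if "t + 2 \<le> T" for t x
  proof -
    have e1: "T - 1 - t = Suc (T - 1 - Suc t)" and e2: "T - 1 - Suc (T - 1 - Suc t) = t" using that by auto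
    show ?thesis unfolding \<epsilon>_def eps_def s_def S_def V_def f_def
      by (simp only: e1 eps_aux.simps e2 Aerr_def diff_Suc_1 Let_def)
  qed
  have V_eq: "\<And>t x. V t x = (if x < s t then H t (S t) + K t else H t x)"
    unfolding V_def Vg_def Vfun_def H_def S_def s_def by simp
  have H_last: "H (T - 1) = C (T - 1)" unfolding H_def C_def by (rule grid_last)
  have S_last: "S (T - 1) = Cmin (C (T - 1))" unfolding S_def C_def by (rule grid_last)
  have s_last: "s (T - 1) = sT" unfolding s_def by (rule grid_last)
  have H_step: "H t = (\<lambda>y. C t y + \<alpha> * gridE \<theta> (f t) (V (Suc t)) y)" if "t + 2 \<le> T" for t
    unfolding H_def C_def f_def V_def
    by (rule grid_step(1)) (use that theta K_nonneg C_coercive in \<open>auto simp: C_def\<close>)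
  have sS: "s t \<le> S t" if "t < T" for t
  proof (cases "t = T - 1")
    case True thus ?thesis using s_last S_last sT_le by simp
  next
    case False
    hence "t + 2 \<le> T" using that by simp
    thus ?thesis unfolding s_def S_def
      by (rule grid_step(2)) (use that theta K_nonneg C_coercive in \<open>auto simp: C_def\<close>)
  qed
  have Cb: "\<exists>b. \<forall>y. b \<le> C t y" if "t < T" for t
    using C_bdd_below[of "C t"] C_convex C_coercive that by blast
  have delta_nn: "\<And>z. 0 \<le> delta z" unfolding delta_def by simp
  have elemLB: "- c t * x + (b + \<alpha> * m) \<le> K t * delta (y - x) + c t * (y - x) + G t y
           + \<alpha> * (\<integral>\<omega>. v (Suc t) (y - D t \<omega>) \<partial>M)"
    if t: "t < T" and m: "\<forall>z. - c (Suc t) * z + m \<le> v (Suc t) z" and b: "\<forall>y. b \<le> C t y" for t x y m b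
  proof -
    have "(\<integral>\<omega>. - c (Suc t) * (y - D t \<omega>) + m \<partial>M) \<le> (\<integral>\<omega>. v (Suc t) (y - D t \<omega>) \<partial>M)"
      using fin_v t m by (intro integral_mono[OF intlin2[OF t]]) auto
    moreover have "(\<integral>\<omega>. - c (Suc t) * (y - D t \<omega>) + m \<partial>M) = - c (Suc t) * y + c (Suc t) * integral\<^sup>L M (D t) + m"
      using intlin[OF t] ED[OF t] Econst by simp
    ultimately have i: "\<alpha> * (- c (Suc t) * y + c (Suc t) * integral\<^sup>L M (D t) + m) \<le> \<alpha> * (\<integral>\<omega>. v (Suc t) (y - D t \<omega>) \<partial>M)"
      using alpha by (intro mult_left_mono) auto
    have k: "0 \<le> K t * delta (y - x)" using K_nonneg t delta_nn by simp
    have cb: "b \<le> (c t - \<alpha> * c (Suc t)) * y + G t y + \<alpha> * c (Suc t) * integral\<^sup>L M (D t)"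
      using b C_eq by metis
    show ?thesis using i k cb by (simp add: algebra_simps)
  qed
  have LB: "\<exists>m. \<forall>x. - c t * x + m \<le> v t x" if "t \<le> T" for t
    using that
  proof (induction t rule: inc_induct)
    case base thus ?case using v_T by (intro exI[of _ 0]) simp
  next
    case (step n)
    obtain m where m: "\<forall>z. - c (Suc n) * z + m \<le> v (Suc n) z" using step.IH by blast
    obtain b where b: "\<forall>y. b \<le> C n y" using Cb step.hyps by blast
    have "- c n * x + (b + \<alpha> * m) \<le> v n x" for x
      unfolding v_step[OF step.hyps(2)]
      by (rule cInf_greatest) (use elemLB[OF step.hyps(2) m b] in auto)
    thus ?case by blast
  qed
  have ineq: "v t x \<le> vp t x" if t: "t < T" and h: "\<forall>z. v (Suc t) z \<le> vp (Suc t) z" for t x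
  proof -
    define y where "y = (if x < s t then S t else x)"
    have yx: "x \<le> y" using sS[OF t] y_def by auto
    obtain m where m: "\<forall>z. - c (Suc t) * z + m \<le> v (Suc t) z" using LB[of "Suc t"] t by auto
    obtain b where b: "\<forall>y. b \<le> C t y" using Cb t by blast
    let ?E = "{K t * delta (y - x) + c t * (y - x) + G t y
           + \<alpha> * (\<integral>\<omega>. v (Suc t) (y - D t \<omega>) \<partial>M) | y. y \<ge> x}"
    have mem: "K t * delta (y - x) + c t * (y - x) + G t y
           + \<alpha> * (\<integral>\<omega>. v (Suc t) (y - D t \<omega>) \<partial>M) \<in> ?E" using yx by blast
    have bdd: "bdd_below ?E"
      by (rule bdd_belowI[where m="- c t * x + (b + \<alpha> * m)"]) (use elemLB[OF t m b] in auto)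
    have "v t x \<le> K t * delta (y - x) + c t * (y - x) + G t y
           + \<alpha> * (\<integral>\<omega>. v (Suc t) (y - D t \<omega>) \<partial>M)"
      unfolding v_step[OF t] by (rule cInf_lower[OF mem bdd])
    also have "\<dots> \<le> K t * delta (y - x) + c t * (y - x) + G t y
           + \<alpha> * (\<integral>\<omega>. vp (Suc t) (y - D t \<omega>) \<partial>M)"
    proof -
      have "(\<integral>\<omega>. v (Suc t) (y - D t \<omega>) \<partial>M) \<le> (\<integral>\<omega>. vp (Suc t) (y - D t \<omega>) \<partial>M)"
        using fin_v fin_vp t h by (intro integral_mono) auto
      thus ?thesis using alpha by (simp add: mult_left_mono)
    qed
    also have "\<dots> = vp t x" using vp_step[OF t, of x] by (simp add: y_def Let_def)
    finally show ?thesis .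
  qed
  have eq_step: "vp t x = V t x - c t * x + \<epsilon> t x"
    if t2: "t + 2 \<le> T" and IH: "\<forall>z. vp (Suc t) z = V (Suc t) z - c (Suc t) * z + \<epsilon> (Suc t) z" for t x
  proof -
    have t: "t < T" using t2 by simp
    define y where "y = (if x < s t then S t else x)"
    have iV: "integrable M (\<lambda>\<omega>. V (Suc t) (y - D t \<omega>))" using fin_V[rule_format, of "Suc t" y] t2 by simp
    have iE: "integrable M (\<lambda>\<omega>. \<epsilon> (Suc t) (y - D t \<omega>))" using fin_eps[rule_format, OF t2] by blast
    have "(\<lambda>\<omega>. vp (Suc t) (y - D t \<omega>)) = (\<lambda>\<omega>. (V (Suc t) (y - D t \<omega>) - c (Suc t) * (y - D t \<omega>)) + \<epsilon> (Suc t) (y - D t \<omega>))"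
      using IH by simp
    hence int1: "(\<integral>\<omega>. vp (Suc t) (y - D t \<omega>) \<partial>M) = (\<integral>\<omega>. V (Suc t) (y - D t \<omega>) \<partial>M)
         - (c (Suc t) * y - c (Suc t) * integral\<^sup>L M (D t)) + (\<integral>\<omega>. \<epsilon> (Suc t) (y - D t \<omega>) \<partial>M)"
      using iV iE intlin[OF t] ED[OF t] by simp
    have vpx: "vp t x = K t * delta (y - x) + c t * (y - x) + G t y + \<alpha> * (\<integral>\<omega>. vp (Suc t) (y - D t \<omega>) \<partial>M)"
      using vp_step[OF t, of x] by (simp add: y_def Let_def)
    have epsx: "\<epsilon> t x = \<alpha> * ((\<integral>\<omega>. V (Suc t) (y - D t \<omega>) \<partial>M) - gridE \<theta> (f t) (V (Suc t)) y)
      + \<alpha> * (\<integral>\<omega>. \<epsilon> (Suc t) (y - D t \<omega>) \<partial>M)"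
      using eps_step[OF t2, of x] by (simp add: y_def Let_def)
    have Vx: "V t x = K t * delta (y - x) + H t y"
    proof (cases "x < s t")
      case True
      hence "0 < S t - x" using sS[OF t] by simp
      thus ?thesis using True V_eq[of t x] y_def by (simp add: delta_def)
    next
      case False thus ?thesis using V_eq[of t x] y_def by (simp add: delta_def)
    qed
    have Hy: "H t y = C t y + \<alpha> * gridE \<theta> (f t) (V (Suc t)) y" using H_step[OF t2] by simp
    have vpx2: "vp t x = K t * delta (y - x) + c t * (y - x) + G t y + \<alpha> * ((\<integral>\<omega>. V (Suc t) (y - D t \<omega>) \<partial>M)
         - (c (Suc t) * y - c (Suc t) * integral\<^sup>L M (D t)) + (\<integral>\<omega>. \<epsilon> (Suc t) (y - D t \<omega>) \<partial>M))"
      using vpx unfolding int1 .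
    have Hc: "H t y = (c t - \<alpha> * c (Suc t)) * y + G t y + \<alpha> * c (Suc t) * integral\<^sup>L M (D t)
       + \<alpha> * gridE \<theta> (f t) (V (Suc t)) y" using Hy C_eq[of t y] by linarith
    show ?thesis by (rule arith1[OF vpx2 Vx Hc epsx])
  qed
  have eq_last: "vp t x = V t x - c t * x + \<epsilon> t x" if tT: "Suc t = T" for t x
  proof -
    have t: "t < T" and t1: "t = T - 1" using tT by auto
    define y where "y = (if x < s t then S t else x)"
    have "(\<lambda>\<omega>. vp (Suc t) (y - D t \<omega>)) = (\<lambda>\<omega>. - c (Suc t) * (y - D t \<omega>))"
      using vp_T tT by simp
    hence int1: "(\<integral>\<omega>. vp (Suc t) (y - D t \<omega>) \<partial>M) = - c (Suc t) * y - (- c (Suc t)) * integral\<^sup>L M (D t)"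
      using ED[OF t] by simp
    have vpx: "vp t x = K t * delta (y - x) + c t * (y - x) + G t y + \<alpha> * (\<integral>\<omega>. vp (Suc t) (y - D t \<omega>) \<partial>M)"
      using vp_step[OF t, of x] by (simp add: y_def Let_def)
    have epsx: "\<epsilon> t x = 0" using eps_last t1 by simp
    have Vx: "V t x = K t * delta (y - x) + H t y"
    proof (cases "x < s t")
      case True
      hence "0 < S t - x" using sS[OF t] by simp
      thus ?thesis using True V_eq[of t x] y_def by (simp add: delta_def)
    next
      case False thus ?thesis using V_eq[of t x] y_def by (simp add: delta_def)
    qed
    have Hy: "H t y = C t y" using H_last t1 by simp
    have vpx2: "vp t x = K t * delta (y - x) + c t * (y - x) + G t y + \<alpha> * (- c (Suc t) * y - (- c (Suc t)) * integral\<^sup>L M (D t))"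
      using vpx unfolding int1 .
    have Hc: "H t y = (c t - \<alpha> * c (Suc t)) * y + G t y + \<alpha> * c (Suc t) * integral\<^sup>L M (D t)"
      using Hy C_eq[of t y] by linarith
    show ?thesis by (rule arith2[OF vpx2 Vx Hc epsx])
  qed
  have main: "(\<forall>x. vp t x = V t x - c t * x + \<epsilon> t x) \<and> (\<forall>x. v t x \<le> vp t x)" if "t \<le> T - 1" for t
    using that
  proof (induction t rule: inc_induct)
    case base
    have "Suc (T - 1) = T" using T2 by simp
    moreover have "T - 1 < T" using T2 by simp
    ultimately show ?case using eq_last ineq[of "T - 1"] v_T vp_T by simp
  next
    case (step n)
    have n2: "n + 2 \<le> T" and n: "n < T" using step.hyps by auto
    have "\<forall>z. v (Suc n) z \<le> vp (Suc n) z" using step.IH by blast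
    thus ?case using eq_step[OF n2] step.IH ineq[OF n] by blast
  qed
  show ?thesis
  proof (intro allI impI)
    fix t x assume t: "t < T"
    have Vs: "Vstar T \<alpha> c K G M D t x = v t x + c t * x" unfolding Vstar_def v_def by simp
    have "t \<le> T - 1" using t by simp
    hence a: "vp t x = V t x - c t * x + \<epsilon> t x" and b: "v t x \<le> vp t x" using main by blast+
    show "0 \<le> vp t x - v t x \<and> vp t x - v t x = V t x - Vstar T \<alpha> c K G M D t x + \<epsilon> t x"
      unfolding Vs using a b by (intro conjI; linarith)
  qed
qed

end
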